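(* Let $\Gamma$ be the first Grigorchuk group with generators $a,b,c,d$, acting on the right on $\{0,1\}^{\mathbb N}$, and let $\rho=111\cdots$. For a word $w=w_1\cdots w_n$ over $\{a,b,c,d\}$ set $\delta(w)=\#\{\rho\,w_{i+1}\cdots w_n: i=0,\dots,n\}$. Let $\eta$ be the real root of $t^3+t^2+t-2$ and $\alpha=\log 2/\log(2/\eta)$. There exist constants $C_1,C_2>0$ such that for every positive integer $\ell$: (1) every word $w$ over $\{a,b,c,d\}$ of length $\ell$ satisfies $\delta(w)\le C_1\ell^\alpha$; (2) there exists a word $w$ over $\{a,b,c,d\}$ of length $\ell$ with $\delta(w)\ge C_2\ell^\alpha$.
   Context: The first Grigorchuk group $\Gamma$ is the group of permutations of $\{0,1\}^{\mathbb N}$ (acting on the right) generated by $a,b,c,d$, defined recursively for $x\in\{0,1\}$ and infinite binary sequences $u$ by: $(xu)a=(1-x)u$; $(0u)b=0(ua)$, $(1u)b=1(uc)$; $(0u)c=0(ua)$, $(1u)c=1(ud)$; $(0u)d=0u$, $(1u)d=1(ub)$. *)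

theory Defs
  imports "HOL-Analysis.Analysis"
begin

datatype gen = A | B | C | D

text \<open>Infinite binary sequences u : nat => bool, with True for the letter 1 and False for 0.
  gact g u is the image (u)g; its n-th letter is computed by recursion on n.\<close>

fun gact :: "gen \<Rightarrow> (nat \<Rightarrow> bool) \<Rightarrow> nat \<Rightarrow> bool" where
  "gact A u n = (if n = 0 then \<not> u 0 else u n)"
| "gact B u 0 = u 0"
| "gact B u (Suc n) = (if u 0 then gact C (u \<circ> Suc) n else gact A (u \<circ> Suc) n)"
| "gact C u 0 = u 0"
| "gact C u (Suc n) = (if u 0 then gact D (u \<circ> Suc) n else gact A (u \<circ> Suc) n)"
| "gact D u 0 = u 0"
| "gact D u (Suc n) = (if u 0 then gact B (u \<circ> Suc) n else u (Suc n))"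

definition word_act :: "(nat \<Rightarrow> bool) \<Rightarrow> gen list \<Rightarrow> (nat \<Rightarrow> bool)" where
  "word_act u w = foldl (\<lambda>v g. gact g v) u w"

definition rho :: "nat \<Rightarrow> bool" where
  "rho = (\<lambda>_. True)"

definition delta :: "gen list \<Rightarrow> nat" where
  "delta w = card {word_act rho (drop i w) | i. i \<le> length w}"

end

theory Submission
  imports Defs
begin

definition cns :: "bool \<Rightarrow> (nat \<Rightarrow> bool) \<Rightarrow> nat \<Rightarrow> bool" where
  "cns x u = (\<lambda>n. case n of 0 \<Rightarrow> x | Suc m \<Rightarrow> u m)"

lemma cns_0[simp]: "cns x u 0 = x" and cns_Suc[simp]: "cns x u (Suc n) = u n"
  by (auto simp: cns_def)

lemma cns_comp_Suc[simp]: "cns x u \<circ> Suc = u"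
  by (auto simp: cns_def)

fun sec1 :: "gen \<Rightarrow> bool \<Rightarrow> gen list" where
  "sec1 A x = []"
| "sec1 B x = (if x then [C] else [A])"
| "sec1 C x = (if x then [D] else [A])"
| "sec1 D x = (if x then [B] else [])"

fun nxt :: "gen \<Rightarrow> bool \<Rightarrow> bool" where
  "nxt A x = (\<not> x)"
| "nxt g x = x"

fun sec :: "bool \<Rightarrow> gen list \<Rightarrow> gen list" where
  "sec st [] = []"
| "sec st (g # s) = sec1 g st @ sec (nxt g st) s"

fun par :: "gen list \<Rightarrow> bool" where
  "par [] = False"
| "par (g # s) = (if g = A then \<not> par s else par s)"

lemma cns_eta: "u = cns (u 0) (u \<circ> Suc)"
  by (auto simp: cns_def fun_eq_iff split: nat.split)

lemma cns_inj[simp]: "cns x u = cns y v \<longleftrightarrow> x = y \<and> u = v"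
proof
  assume h: "cns x u = cns y v"
  have "x = y" using arg_cong[OF h, of "\<lambda>f. f 0"] by simp
  moreover have "u = v" using arg_cong[OF h, of "\<lambda>f. f \<circ> Suc"] by simp
  ultimately show "x = y \<and> u = v" by simp
qed simp

lemma word_act_Nil[simp]: "word_act u [] = u"
  by (simp add: word_act_def)
lemma word_act_Cons[simp]: "word_act u (g # s) = word_act (gact g u) s"
  by (simp add: word_act_def)
lemma word_act_append[simp]: "word_act u (s @ t) = word_act (word_act u s) t"
  by (simp add: word_act_def)
lemma gact_cns: "gact g (cns x u) = cns (if g = A then \<not> x else x) (word_act u (sec1 g x))"
proof (rule ext)
  fix n show "gact g (cns x u) n = cns (if g = A then \<not> x else x) (word_act u (sec1 g x)) n"
    by (cases n; cases g) auto
qed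

lemma word_act_cns: "word_act (cns x u) s = cns (x \<noteq> par s) (word_act u (sec x s))"
proof (induction s arbitrary: x u)
  case Nil then show ?case by simp
next
  case (Cons g s)
  show ?case
    by (cases g) (simp_all add: gact_cns Cons)
qed

lemma sec_append: "sec st (p @ s) = sec st p @ sec (st \<noteq> par p) s"
proof (induction p arbitrary: st)
  case Nil then show ?case by simp
next
  case (Cons g p) then show ?case by (cases g) auto
qed

lemma par_append: "par (p @ s) = (par p \<noteq> par s)"
  by (induction p) auto

lemma rho_cns: "rho = cns True rho"
  by (auto simp: rho_def cns_def fun_eq_iff split: nat.split)
lemma gact_AA[simp]: "gact A (gact A u) = u"
  by (auto simp: fun_eq_iff)

fun mulg :: "gen \<Rightarrow> gen \<Rightarrow> gen list" where
  "mulg B B = []" | "mulg B C = [D]" | "mulg B D = [C]"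
| "mulg C B = [D]" | "mulg C C = []" | "mulg C D = [B]"
| "mulg D B = [C]" | "mulg D C = [B]" | "mulg D D = []"
| "mulg A A = []"
| "mulg x y = [x, y]"

lemma mulg_pt: "\<forall>u x y. word_act u [x,y] n = word_act u (mulg x y) n"
proof (induction n)
  case 0
  show ?case
  proof (intro allI)
    fix u x y
    show "word_act u [x,y] 0 = word_act u (mulg x y) 0"
      by (subst (1 2) cns_eta[of u], simp only: word_act_cns, cases x; cases y; simp)
  qed
next
  case (Suc n)
  show ?case
  proof (intro allI)
    fix u x y
    have IH: "\<And>v x y. word_act v [x,y] n = word_act v (mulg x y) n" using Suc by blast
    show "word_act u [x,y] (Suc n) = word_act u (mulg x y) (Suc n)"
      apply (subst (1 2) cns_eta[of u], simp only: word_act_cns cns_Suc)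
      apply (cases "u 0"; cases x; cases y)
      using IH[of "u \<circ> Suc" B B] IH[of "u \<circ> Suc" B C] IH[of "u \<circ> Suc" B D] IH[of "u \<circ> Suc" C B] IH[of "u \<circ> Suc" C C] IH[of "u \<circ> Suc" C D] IH[of "u \<circ> Suc" D B] IH[of "u \<circ> Suc" D C] IH[of "u \<circ> Suc" D D] by simp_all
  qed
qed

lemma mulg_eq: "word_act u [x,y] = word_act u (mulg x y)"
  using mulg_pt by blast

lemma mulg_eq2: "word_act u (x # y # s) = word_act u (mulg x y @ s)"
proof -
  have "word_act u (x # y # s) = word_act (word_act u [x,y]) s" by simp
  also have "\<dots> = word_act (word_act u (mulg x y)) s" by (simp only: mulg_eq)
  finally show ?thesis by simp
qed

definition pts :: "gen list \<Rightarrow> (nat \<Rightarrow> bool) set" where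
  "pts w = {word_act rho (drop i w) | i. i \<le> length w}"

lemma delta_pts: "delta w = card (pts w)"
  by (simp add: delta_def pts_def)

lemma pts_finite[simp]: "finite (pts w)"
proof -
  have "pts w = (\<lambda>i. word_act rho (drop i w)) ` {..length w}"
    by (auto simp: pts_def)
  then show ?thesis by simp
qed

lemma suffix_in_pts: "word_act rho s \<in> pts (p @ s)"
  unfolding pts_def
  by (rule CollectI, rule exI[of _ "length p"]) simp

lemma pts_elim: "q \<in> pts w \<Longrightarrow> \<exists>p s. w = p @ s \<and> q = word_act rho s"
  unfolding pts_def by (auto intro: append_take_drop_id[symmetric])

lemma pts_Cons: "pts (g # s) = insert (word_act rho (g # s)) (pts s)"
proof
  show "pts (g # s) \<subseteq> insert (word_act rho (g # s)) (pts s)"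
  proof
    fix q assume "q \<in> pts (g # s)"
    then obtain i where i: "i \<le> length (g # s)" "q = word_act rho (drop i (g # s))"
      by (auto simp: pts_def)
    show "q \<in> insert (word_act rho (g # s)) (pts s)"
    proof (cases i)
      case 0 then show ?thesis using i by simp
    next
      case (Suc j) then show ?thesis using i by (auto simp: pts_def)
    qed
  qed
next
  show "insert (word_act rho (g # s)) (pts s) \<subseteq> pts (g # s)"
  proof -
    have "word_act rho (g # s) \<in> pts (g # s)" using suffix_in_pts[of "g # s" "[]"] by simp
    moreover have "pts s \<subseteq> pts (g # s)"
    proof
      fix q assume "q \<in> pts s"
      then obtain p s' where "s = p @ s'" "q = word_act rho s'" using pts_elim by blast
      then show "q \<in> pts (g # s)" using suffix_in_pts[of s' "g # p"] by simp
    qed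
    ultimately show ?thesis by blast
  qed
qed

lemma pts_Nil: "pts [] = {rho}"
  by (simp add: pts_def)

lemma rho_in_pts: "rho \<in> pts w"
  using suffix_in_pts[of "[]" w] by simp

lemma gact_rho_pt: "\<forall>g. g \<noteq> A \<longrightarrow> gact g rho n"
proof (induction n)
  case 0 then show ?case
    by (subst rho_cns) (auto simp: gact_cns)
next
  case (Suc n)
  show ?case
  proof (intro allI impI)
    fix g :: gen assume "g \<noteq> A"
    then show "gact g rho (Suc n)"
      using Suc by (subst rho_cns) (cases g; simp add: gact_cns)
  qed
qed

lemma gact_rho: "g \<noteq> A \<Longrightarrow> gact g rho = rho"
  using gact_rho_pt by (auto simp: fun_eq_iff rho_def)

lemma word_act_rho_nonA: "g \<noteq> A \<Longrightarrow> word_act rho (g # s) = word_act rho s"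
  by (simp add: gact_rho)

lemma delta_Cons_nonA: "g \<noteq> A \<Longrightarrow> delta (g # s) = delta s"
proof -
  assume g: "g \<noteq> A"
  have "word_act rho s \<in> pts s"
    using suffix_in_pts[of s "[]"] by simp
  then have "word_act rho (g # s) \<in> pts s"
    by (simp only: word_act_rho_nonA[OF g])
  then show ?thesis by (simp add: delta_pts pts_Cons insert_absorb)
qed

fun nA :: "gen list \<Rightarrow> nat" where
  "nA [] = 0" | "nA (g # s) = (if g = A then Suc (nA s) else nA s)"

lemma delta_le_nA: "delta w \<le> 1 + nA w"
proof (induction w)
  case Nil then show ?case by (simp add: delta_pts pts_Nil)
next
  case (Cons g s)
  show ?case
  proof (cases "g = A")
    case True
    have "delta (g # s) \<le> Suc (delta s)"
      by (simp add: delta_pts pts_Cons card_insert_le_m1 card_insert_if)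
    then show ?thesis using Cons True by simp
  next
    case False then show ?thesis using Cons by (simp add: delta_Cons_nonA)
  qed
qed

lemma delta_suffix: "delta s \<le> delta (p @ s)"
proof -
  have "pts s \<subseteq> pts (p @ s)"
  proof
    fix q assume "q \<in> pts s"
    then obtain p' s' where "s = p' @ s'" "q = word_act rho s'" using pts_elim by blast
    then show "q \<in> pts (p @ s)" using suffix_in_pts[of s' "p @ p'"] by simp
  qed
  then show ?thesis by (simp add: delta_pts card_mono)
qed

lemma drop_suffix_in_pts: "word_act rho (drop j s) \<in> pts (p @ s)"
  using suffix_in_pts[of "drop j s" "p @ take j s"] by simp

lemma merge_pts:
  assumes "x \<noteq> A" "y \<noteq> A"
  shows "pts (p @ x # y # s) \<subseteq> pts (p @ mulg x y @ s)"
proof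
  fix q assume "q \<in> pts (p @ x # y # s)"
  then obtain i where i: "i \<le> length (p @ x # y # s)" "q = word_act rho (drop i (p @ x # y # s))"
    by (auto simp: pts_def)
  show "q \<in> pts (p @ mulg x y @ s)"
  proof (cases "i \<le> length p")
    case True
    then have "q = word_act (word_act rho (drop i p)) (x # y # s)" using i by simp
    also have "\<dots> = word_act (word_act rho (drop i p)) (mulg x y @ s)" by (rule mulg_eq2)
    also have "\<dots> = word_act rho (drop i p @ mulg x y @ s)" by simp
    moreover have "take i p @ drop i p @ mulg x y @ s = p @ mulg x y @ s"
      by (simp add: append_assoc[symmetric] del: append_assoc)
    ultimately show ?thesis using suffix_in_pts[of "drop i p @ mulg x y @ s" "take i p"]
      by metis
  next
    case False
    then obtain j where j: "i = length p + Suc j" by (metis add_Suc_right less_imp_Suc_add not_le)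
    show ?thesis
    proof (cases j)
      case 0
      then have "q = word_act rho (y # s)" using i j by simp
      also have "\<dots> = word_act rho (drop 0 s)" using assms by (simp add: gact_rho)
      finally show ?thesis using drop_suffix_in_pts[of 0 s "p @ mulg x y"] by simp
    next
      case (Suc k)
      then have "q = word_act rho (drop k s)" using i j by simp
      then show ?thesis using drop_suffix_in_pts[of k s "p @ mulg x y"] by simp
    qed
  qed
qed

lemma merge_delta:
  assumes "x \<noteq> A" "y \<noteq> A"
  shows "delta (p @ x # y # s) \<le> delta (p @ mulg x y @ s)"
  using merge_pts[OF assms] by (simp add: delta_pts card_mono)

lemma section_pts:
  "pts w \<subseteq> cns (\<not> par w) ` pts (sec True w) \<union> cns (par w) ` pts (sec False w)"
proof
  fix q assume "q \<in> pts w"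
  then obtain p s where ps: "w = p @ s" "q = word_act rho s" using pts_elim by blast
  have q: "q = cns (\<not> par s) (word_act rho (sec True s))"
    using ps(2) word_act_cns[of True rho s] rho_cns by simp
  have sp: "sec (\<not> par p) w = sec (\<not> par p) p @ sec True s"
    using ps(1) sec_append[of "\<not> par p" p s] by simp
  have pw: "par w = (par p \<noteq> par s)" using ps(1) par_append by simp
  have mem: "word_act rho (sec True s) \<in> pts (sec (\<not> par p) w)"
    using sp suffix_in_pts by metis
  show "q \<in> cns (\<not> par w) ` pts (sec True w) \<union> cns (par w) ` pts (sec False w)"
  proof (cases "par p")
    case True
    then show ?thesis using mem q pw by auto
  next
    case False
    then show ?thesis using mem q pw by auto
  qed
qed

lemma section_delta: "delta w \<le> delta (sec True w) + delta (sec False w)"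
proof -
  have "delta w \<le> card (cns (\<not> par w) ` pts (sec True w) \<union> cns (par w) ` pts (sec False w))"
    unfolding delta_pts by (rule card_mono[OF _ section_pts]) simp
  also have "\<dots> \<le> card (cns (\<not> par w) ` pts (sec True w)) + card (cns (par w) ` pts (sec False w))"
    by (rule card_Un_le)
  also have "\<dots> \<le> delta (sec True w) + delta (sec False w)"
    unfolding delta_pts by (intro add_mono card_image_le) simp_all
  finally show ?thesis .
qed

lemma eta_bounds:
  fixes e :: real assumes h: "e^3 + e^2 + e - 2 = 0"
  shows "0 < e" "e < 1"
proof -
  show "0 < e"
  proof (rule ccontr)
    assume "\<not> 0 < e"
    then have "e \<le> 0" by simp
    have "0 \<le> (e + 1/2)^2" by simp
    then have "0 \<le> e^2 + e + 1" by (simp add: power2_eq_square algebra_simps)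
    then have "e * (e^2 + e + 1) \<le> 0"
      using \<open>e \<le> 0\<close> by (simp add: mult_nonpos_nonneg)
    then show False using h by (simp add: power3_eq_cube power2_eq_square algebra_simps)
  qed
  show "e < 1"
  proof (rule ccontr)
    assume "\<not> e < 1"
    then have "1 \<le> e" by simp
    then have "1 \<le> e^2" "1 \<le> e^3" by (simp_all add: one_le_power)
    then show False using h \<open>1 \<le> e\<close> by linarith
  qed
qed

definition kap :: "real \<Rightarrow> real" where "kap e = 1 / (1 - e^3)"

fun wt :: "real \<Rightarrow> gen \<Rightarrow> real" where
  "wt e A = 1"
| "wt e B = e^3 * kap e"
| "wt e C = e * kap e - 1"
| "wt e D = e^2 * kap e - 1"

definition nrm :: "real \<Rightarrow> gen list \<Rightarrow> real" where
  "nrm e w = sum_list (map (wt e) w)"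

lemma nrm_Nil[simp]: "nrm e [] = 0" and nrm_Cons[simp]: "nrm e (g # s) = wt e g + nrm e s"
  and nrm_append[simp]: "nrm e (s @ t) = nrm e s + nrm e t"
  by (simp_all add: nrm_def)

lemma kap_facts:
  fixes e :: real assumes h: "e^3 + e^2 + e - 2 = 0"
  shows "1 - e^3 > 0" "kap e * (1 - e^3) = 1" "kap e > 0"
proof -
  have e: "0 < e" "e < 1" using eta_bounds[OF h] by auto
  have "e^3 < 1" using e by (simp add: power_less_one_iff)
  then show a: "1 - e^3 > 0" by simp
  then show "kap e * (1 - e^3) = 1" by (simp add: kap_def)
  show "kap e > 0" using a by (simp add: kap_def)
qed

lemma wt_nonneg:
  fixes e :: real assumes h: "e^3 + e^2 + e - 2 = 0"
  shows "wt e g \<ge> 0"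
proof -
  have e: "0 < e" "e < 1" using eta_bounds[OF h] by auto
  note k = kap_facts[OF h]
  have "e * kap e - 1 = (e - (1 - e^3)) * kap e" using k(2) by (simp add: algebra_simps)
  also have "e - (1 - e^3) = 1 - e^2" using h by (simp add: algebra_simps)
  finally have c: "e * kap e - 1 = (1 - e^2) * kap e" .
  have "e^2 * kap e - 1 = (e^2 - (1 - e^3)) * kap e" using k(2) by (simp add: algebra_simps)
  also have "e^2 - (1 - e^3) = 1 - e" using h by (simp add: algebra_simps)
  finally have d: "e^2 * kap e - 1 = (1 - e) * kap e" .
  have "e^2 < 1" using e by (simp add: power_less_one_iff)
  then show ?thesis using e k c d by (cases g) auto
qed

lemma wt_sec:
  fixes e :: real assumes h: "e^3 + e^2 + e - 2 = 0" and g: "g \<noteq> A"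
  shows "nrm e (sec1 g True) + nrm e (sec1 g False) = e * (wt e g + 1)"
proof -
  note k = kap_facts[OF h]
  have kk: "kap e = 1 + e^3 * kap e" using k(2) by (simp add: algebra_simps)
  show ?thesis using g
  proof (cases g)
    case B
    have "e * kap e = e * (1 + e^3 * kap e)" using kk by simp
    then show ?thesis using B by (simp add: algebra_simps power3_eq_cube)
  next
    case C then show ?thesis by (simp add: algebra_simps power2_eq_square)
  next
    case D then show ?thesis by (simp add: algebra_simps power2_eq_square power3_eq_cube)
  qed simp
qed

lemma wt_expl:
  fixes e :: real assumes h: "e^3 + e^2 + e - 2 = 0"
  shows "wt e C = (1 - e^2) * kap e" "wt e D = (1 - e) * kap e" "wt e B = e^3 * kap e"
proof -
  note k = kap_facts[OF h]
  have "e * kap e - 1 = (e - (1 - e^3)) * kap e" using k(2) by (simp add: algebra_simps)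
  also have "e - (1 - e^3) = 1 - e^2" using h by (simp add: algebra_simps)
  finally show "wt e C = (1 - e^2) * kap e" by simp
  have "e^2 * kap e - 1 = (e^2 - (1 - e^3)) * kap e" using k(2) by (simp add: algebra_simps)
  also have "e^2 - (1 - e^3) = 1 - e" using h by (simp add: algebra_simps)
  finally show "wt e D = (1 - e) * kap e" by simp
  show "wt e B = e^3 * kap e" by simp
qed

lemma mulg_nrm:
  fixes e :: real assumes h: "e^3 + e^2 + e - 2 = 0" and x: "x \<noteq> A" and y: "y \<noteq> A"
  shows "nrm e (mulg x y) \<le> wt e x + wt e y"
proof -
  have e: "0 < e" "e < 1" using eta_bounds[OF h] by auto
  have kp: "kap e > 0" using kap_facts[OF h] by simp
  note W = wt_expl[OF h]
  have nn: "\<And>g. wt e g \<ge> 0" using wt_nonneg[OF h] by blast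
  have e2: "e^2 \<le> e" using e by (simp add: power2_eq_square mult_left_le_one_le less_imp_le)
  have e3: "0 \<le> e^3" using e by simp
  have i1: "wt e D \<le> wt e B + wt e C"
  proof -
    have "1 - e \<le> e^3 + (1 - e^2)" using e2 e3 by linarith
    then have "(1 - e) * kap e \<le> (e^3 + (1 - e^2)) * kap e" using kp by (simp add: mult_right_mono)
    then show ?thesis using W by (simp add: algebra_simps)
  qed
  have i2: "wt e C \<le> wt e B + wt e D"
  proof -
    have "1 - e^2 \<le> e^3 + (1 - e)" using h e by (simp add: algebra_simps)
    then have "(1 - e^2) * kap e \<le> (e^3 + (1 - e)) * kap e" using kp by (simp add: mult_right_mono)
    then show ?thesis using W by (simp add: algebra_simps)
  qed
  have i3: "wt e B \<le> wt e C + wt e D"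
  proof -
    have "e^3 = (1 - e^2) + (1 - e)" using h by (simp add: algebra_simps)
    then have "e^3 * kap e = ((1 - e^2) + (1 - e)) * kap e" by simp
    then have "e^3 * kap e = (1 - e^2) * kap e + (1 - e) * kap e" by (simp only: distrib_right)
    then show ?thesis using W by simp
  qed
  show ?thesis using x y i1 i2 i3 nn
    by (cases x; cases y) (simp_all del: wt.simps add: add.commute add_nonneg_nonneg)
qed

fun alt :: "gen list \<Rightarrow> bool" where
  "alt [] = True"
| "alt [x] = True"
| "alt (x # y # s) = ((x = A \<or> y = A) \<and> alt (y # s))"

lemma not_alt: "\<not> alt w \<Longrightarrow> \<exists>p x y s. w = p @ x # y # s \<and> x \<noteq> A \<and> y \<noteq> A"
proof (induction w rule: alt.induct)
  case (3 x y s)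
  show ?case
  proof (cases "x = A \<or> y = A")
    case True
    then have "\<not> alt (y # s)" using 3(2) by simp
    then obtain p x' y' s' where "y # s = p @ x' # y' # s'" "x' \<noteq> A" "y' \<noteq> A" using 3(1) by blast
    then show ?thesis by (metis append_Cons)
  next
    case False
    then show ?thesis by (metis append_Nil)
  qed
qed simp_all

lemma alt_Cons: "alt (g # s) \<Longrightarrow> alt s"
  by (cases s) auto

lemma alt_sec_nrm:
  fixes e :: real assumes h: "e^3 + e^2 + e - 2 = 0"
  shows "alt w \<Longrightarrow> nrm e (sec True w) + nrm e (sec False w)
           \<le> e * (nrm e w + (if w = [] \<or> hd w = A then 0 else 1))"
proof (induction w)
  case Nil then show ?case by simp
next
  case (Cons g s)
  have e: "0 < e" "e < 1" using eta_bounds[OF h] by auto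
  have IH: "nrm e (sec True s) + nrm e (sec False s) \<le> e * (nrm e s + (if s = [] \<or> hd s = A then 0 else 1))"
    using Cons alt_Cons by blast
  show ?case
  proof (cases "g = A")
    case True
    have "e * (nrm e s + (if s = [] \<or> hd s = A then 0 else 1)) \<le> e * (nrm e s + 1)"
      using e by (intro mult_left_mono) auto
    moreover have "nrm e (sec True (g # s)) + nrm e (sec False (g # s)) = nrm e (sec True s) + nrm e (sec False s)"
      using True by (simp add: add.commute)
    moreover have "e * (nrm e (g # s) + (if g # s = [] \<or> hd (g # s) = A then 0 else 1)) = e * (nrm e s + 1)"
      using True by (simp add: add.commute)
    ultimately show ?thesis using IH by linarith
  next
    case False
    have s: "s = [] \<or> hd s = A" using Cons.prems False by (cases s) auto
    have "nrm e (sec True (g # s)) + nrm e (sec False (g # s))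
        = (nrm e (sec1 g True) + nrm e (sec1 g False)) + (nrm e (sec True s) + nrm e (sec False s))"
      using False by (cases g) auto
    also have "\<dots> \<le> e * (wt e g + 1) + e * nrm e s"
      using wt_sec[OF h False] IH s by auto
    finally show ?thesis using False by (simp add: algebra_simps)
  qed
qed

lemma nA_le_nrm:
  fixes e :: real assumes h: "e^3 + e^2 + e - 2 = 0"
  shows "real (nA w) \<le> nrm e w"
proof (induction w)
  case (Cons g s)
  then show ?case using wt_nonneg[OF h, of g] by (cases "g = A") auto
qed simp

lemma mulg_len: "x \<noteq> A \<Longrightarrow> y \<noteq> A \<Longrightarrow> length (mulg x y) \<le> 1"
  by (cases x; cases y) auto

lemma upper_k:
  fixes e :: real assumes h: "e^3 + e^2 + e - 2 = 0"
  shows "\<forall>w. real (delta w) \<le> 2^(k+1) - 1 + e^k * nrm e w"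
proof (induction k)
  case 0
  show ?case
  proof
    fix w
    have "real (delta w) \<le> 1 + real (nA w)" using delta_le_nA[of w] by linarith
    then show "real (delta w) \<le> 2^(0+1) - 1 + e^0 * nrm e w" using nA_le_nrm[OF h, of w] by simp
  qed
next
  case (Suc k)
  have e: "0 < e" "e < 1" using eta_bounds[OF h] by auto
  have ek1: "e^(Suc k) \<le> 1" using e by (intro power_le_one) auto
  have ek: "0 \<le> e^k" "e^(Suc k) \<le> 1" "0 \<le> e^(Suc k)" using e ek1 by simp_all
  show ?case
  proof
    fix w
    show "real (delta w) \<le> 2^(Suc k+1) - 1 + e^(Suc k) * nrm e w"
    proof (induction w rule: length_induct)
      case (1 w)
      show ?case
      proof (cases "alt w")
        case False
        then obtain p x y s where w: "w = p @ x # y # s" "x \<noteq> A" "y \<noteq> A" using not_alt by blast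
        define w' where "w' = p @ mulg x y @ s"
        have len: "length w' < length w" using mulg_len[OF w(2,3)] w(1) by (simp add: w'_def)
        have d: "delta w \<le> delta w'" using merge_delta[OF w(2,3)] w(1) by (simp add: w'_def)
        have n: "nrm e w' \<le> nrm e w" using mulg_nrm[OF h w(2,3)] w(1) by (simp add: w'_def)
        have "real (delta w') \<le> 2^(Suc k+1) - 1 + e^(Suc k) * nrm e w'" using 1 len by blast
        also have "\<dots> \<le> 2^(Suc k+1) - 1 + e^(Suc k) * nrm e w"
          using n ek by (simp add: mult_left_mono)
        finally show ?thesis using d by linarith
      next
        case True
        have s: "nrm e (sec True w) + nrm e (sec False w) \<le> e * (nrm e w + 1)"
        proof -
          have "nrm e (sec True w) + nrm e (sec False w) \<le> e * (nrm e w + (if w = [] \<or> hd w = A then 0 else 1))"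
            using alt_sec_nrm[OF h True] .
          also have "\<dots> \<le> e * (nrm e w + 1)" using e by (intro mult_left_mono) auto
          finally show ?thesis .
        qed
        have "real (delta w) \<le> real (delta (sec True w)) + real (delta (sec False w))"
          using section_delta[of w] by linarith
        also have "\<dots> \<le> (2^(k+1) - 1 + e^k * nrm e (sec True w)) + (2^(k+1) - 1 + e^k * nrm e (sec False w))"
          using Suc.IH by (intro add_mono) blast+
        also have "\<dots> = 2^(k+2) - 2 + e^k * (nrm e (sec True w) + nrm e (sec False w))"
          by (simp add: algebra_simps)
        also have "\<dots> \<le> 2^(k+2) - 2 + e^k * (e * (nrm e w + 1))"
          using s ek by (simp add: mult_left_mono)
        also have "\<dots> = 2^(k+2) - 2 + e^(Suc k) * nrm e w + e^(Suc k)"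
          by (simp add: algebra_simps)
        also have "\<dots> \<le> 2^(Suc k+1) - 1 + e^(Suc k) * nrm e w"
          using ek by simp
        finally show ?thesis .
      qed
    qed
  qed
qed

lemma gact_CD[simp]: "gact D (gact C v) = gact B v"
  using mulg_eq[of v C D] by simp
lemma gact_CC[simp]: "gact C (gact C v) = v"
  using mulg_eq[of v C C] by simp

fun tau :: "gen \<Rightarrow> gen list" where
  "tau A = []" | "tau B = [B, D, C]" | "tau C = [B, B]" | "tau D = [C, C]"

definition wp :: "gen list \<Rightarrow> gen list" where
  "wp l = concat (map (\<lambda>y. [A, y]) l)"

lemma wp_simps[simp]: "wp [] = []" "wp (y # l) = A # y # wp l" "wp (l1 @ l2) = wp l1 @ wp l2"
  by (simp_all add: wp_def)

definition wordY :: "gen list \<Rightarrow> gen list" where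
  "wordY l = wp l @ [A]"

definition WW :: "gen list \<Rightarrow> gen list" where
  "WW l = wp (concat (map tau l)) @ [A, B, A]"

fun parB :: "gen list \<Rightarrow> bool" where
  "parB [] = False" | "parB (y # s) = (if y = B then \<not> parB s else parB s)"

lemma WW_main:
  "(\<forall>u. word_act u (sec True (WW Ys)) = (if parB Ys then gact C (word_act u (wordY Ys)) else word_act u (wordY Ys)))
   \<and> (\<forall>u. word_act u (A # sec False (WW Ys)) = (if parB Ys then word_act u (wordY Ys) else gact C (word_act u (wordY Ys))))
   \<and> par (WW Ys) = parB Ys"
proof (induction Ys)
  case Nil then show ?case by (simp add: WW_def wordY_def)
next
  case (Cons y Ys)
  have e1: "WW (y # Ys) = wp (tau y) @ WW Ys" by (simp add: WW_def)
  have e2: "wordY (y # Ys) = A # y # wordY Ys" by (simp add: wordY_def)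
  show ?case using Cons unfolding e1 e2
    by (cases y) (simp_all add: sec_append par_append)
qed

lemma ptW: "word_act rho (WW Ys) =
   (if parB Ys then cns False (gact C (word_act rho (wordY Ys))) else cns True (word_act rho (wordY Ys)))"
proof -
  have "word_act rho (WW Ys) = word_act (cns True rho) (WW Ys)" by (subst rho_cns) (rule refl)
  also have "\<dots> = cns (True \<noteq> par (WW Ys)) (word_act rho (sec True (WW Ys)))" by (rule word_act_cns)
  finally show ?thesis using WW_main[of Ys] by auto
qed

lemma ptAxW: assumes "x = B \<or> x = C"
  shows "word_act rho (A # x # WW Ys) =
   (if parB Ys then cns True (word_act rho (wordY Ys)) else cns False (gact C (word_act rho (wordY Ys))))"
proof -
  have "word_act rho (A # x # WW Ys) = word_act (cns True rho) (A # x # WW Ys)" by (subst rho_cns) (rule refl)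
  also have "\<dots> = cns (True \<noteq> par (A # x # WW Ys)) (word_act rho (sec True (A # x # WW Ys)))" by (rule word_act_cns)
  also have "sec True (A # x # WW Ys) = A # sec False (WW Ys)" using assms by auto
  also have "par (A # x # WW Ys) = (\<not> par (WW Ys))" using assms by auto
  finally show ?thesis using WW_main[of Ys] by auto
qed

lemma ptsY_aux:
  "set Y \<subseteq> {B, C, D} \<Longrightarrow> j \<le> length (wordY Y) \<Longrightarrow>
   word_act rho (drop j (wordY Y)) = rho \<or> (\<exists>i \<le> length Y. word_act rho (drop j (wordY Y)) = word_act rho (wordY (drop i Y)))"
proof (induction Y arbitrary: j)
  case Nil
  then have "j = 0 \<or> j = 1" by (auto simp: wordY_def)
  then show ?case by (auto simp: wordY_def)
next
  case (Cons y Ys)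
  have e2: "wordY (y # Ys) = A # y # wordY Ys" by (simp add: wordY_def)
  have y: "y \<noteq> A" using Cons.prems by auto
  show ?case
  proof (cases j)
    case 0 then show ?thesis by (intro disjI2 exI[of _ 0]) simp
  next
    case (Suc j1)
    show ?thesis
    proof (cases j1)
      case 0
      have "word_act rho (drop j (wordY (y # Ys))) = word_act rho (wordY (drop 1 (y # Ys)))"
        using Suc 0 e2 y by (simp add: gact_rho)
      then show ?thesis by (intro disjI2 exI[of _ 1]) simp
    next
      case (Suc j2)
      have "j2 \<le> length (wordY Ys)" using Cons.prems \<open>j = Suc j1\<close> Suc e2 by simp
      then have "word_act rho (drop j2 (wordY Ys)) = rho \<or> (\<exists>i \<le> length Ys. word_act rho (drop j2 (wordY Ys)) = word_act rho (wordY (drop i Ys)))"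
        using Cons.IH Cons.prems by simp
      moreover have "drop j (wordY (y # Ys)) = drop j2 (wordY Ys)" using \<open>j = Suc j1\<close> Suc e2 by simp
      ultimately show ?thesis
        by (metis Suc_le_mono drop_Suc_Cons length_Cons)
    qed
  qed
qed

lemma ptsY:
  assumes "set Y \<subseteq> {B, C, D}" "q \<in> pts (wordY Y)"
  shows "q = rho \<or> (\<exists>i \<le> length Y. q = word_act rho (wordY (drop i Y)))"
  using assms ptsY_aux[OF assms(1)] by (auto simp: pts_def)

lemma last_pre: "\<exists>q x. B # concat (map tau l) = q @ [x] \<and> (x = B \<or> x = C)"
proof (induction l rule: rev_induct)
  case Nil then show ?case by auto
next
  case (snoc y l)
  then obtain q x where qx: "B # concat (map tau l) = q @ [x]" "x = B \<or> x = C" by blast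
  show ?case
  proof (cases y)
    case A then show ?thesis using qx by auto
  next
    case B then show ?thesis using qx by (intro exI[of _ "q @ [x, B, D]"] exI[of _ C]) auto
  next
    case C then show ?thesis using qx by (intro exI[of _ "q @ [x, B]"] exI[of _ B]) auto
  next
    case D then show ?thesis using qx by (intro exI[of _ "q @ [x, C]"] exI[of _ C]) auto
  qed
qed

definition stepX :: "gen list \<Rightarrow> gen list" where
  "stepX Y = B # concat (map tau Y) @ [B]"

lemma pts_double:
  assumes Y: "set Y \<subseteq> {B, C, D}" and q: "q \<in> pts (wordY Y)"
  shows "cns True q \<in> pts (wordY (stepX Y)) \<and> cns False (gact C q) \<in> pts (wordY (stepX Y))"
proof -
  have last: "word_act rho [A] \<in> pts (wordY (stepX Y))"
    using suffix_in_pts[of "[A]" "wp (stepX Y)"] by (simp add: wordY_def)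
  have rhoA: "word_act rho [A] = cns False rho"
    by (subst rho_cns) (simp add: gact_cns)
  have rhoC: "gact C rho = rho" by (simp add: gact_rho)
  from ptsY[OF Y q] show ?thesis
  proof
    assume "q = rho"
    then show ?thesis using last rhoA rhoC rho_in_pts rho_cns by metis
  next
    assume "\<exists>i \<le> length Y. q = word_act rho (wordY (drop i Y))"
    then obtain i where i: "i \<le> length Y" "q = word_act rho (wordY (drop i Y))" by blast
    obtain pq x where pqx: "B # concat (map tau (take i Y)) = pq @ [x]" "x = B \<or> x = C"
      using last_pre by blast
    have "wordY (stepX Y) = wp (B # concat (map tau (take i Y))) @ WW (drop i Y)"
    proof -
      have "stepX Y = (B # concat (map tau (take i Y))) @ concat (map tau (drop i Y)) @ [B]"
        unfolding stepX_def by (metis append_Cons append_take_drop_id concat_append map_append append.assoc)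
      then show ?thesis by (simp add: wordY_def WW_def)
    qed
    also have "\<dots> = wp pq @ (A # x # WW (drop i Y))" using pqx(1) by simp
    finally have wx: "wordY (stepX Y) = wp pq @ (A # x # WW (drop i Y))" .
    have m1: "word_act rho (A # x # WW (drop i Y)) \<in> pts (wordY (stepX Y))"
      using suffix_in_pts[of "A # x # WW (drop i Y)" "wp pq"] wx by simp
    have m2: "word_act rho (WW (drop i Y)) \<in> pts (wordY (stepX Y))"
      using suffix_in_pts[of "WW (drop i Y)" "wp pq @ [A, x]"] wx by simp
    show ?thesis using m1 m2 ptW[of "drop i Y"] ptAxW[OF pqx(2), of "drop i Y"] i(2)
      by (cases "parB (drop i Y)") auto
  qed
qed

lemma delta_double:
  assumes Y: "set Y \<subseteq> {B, C, D}"
  shows "2 * delta (wordY Y) \<le> delta (wordY (stepX Y))"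
proof -
  let ?P = "pts (wordY Y)"
  have sub: "cns True ` ?P \<union> (\<lambda>q. cns False (gact C q)) ` ?P \<subseteq> pts (wordY (stepX Y))"
    using pts_double[OF Y] by blast
  have inj1: "inj_on (cns True) ?P" by (auto simp: inj_on_def)
  have inj2: "inj_on (\<lambda>q. cns False (gact C q)) ?P"
    by (auto simp: inj_on_def) (metis gact_CC)
  have disj: "cns True ` ?P \<inter> (\<lambda>q. cns False (gact C q)) ` ?P = {}" by auto
  have "card (cns True ` ?P \<union> (\<lambda>q. cns False (gact C q)) ` ?P) = card ?P + card ?P"
    using card_Un_disjoint[OF _ _ disj] card_image[OF inj1] card_image[OF inj2] by simp
  then have "card ?P + card ?P \<le> card (pts (wordY (stepX Y)))"
    using card_mono[OF pts_finite sub] by simp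
  then show ?thesis by (simp add: delta_pts)
qed

fun Xs :: "nat \<Rightarrow> gen list" where
  "Xs 0 = []" | "Xs (Suc k) = stepX (Xs k)"

lemma set_tau: "set (tau g) \<subseteq> {B, C, D}"
  by (cases g) auto

lemma set_Xs: "set (Xs k) \<subseteq> {B, C, D}"
  by (induction k) (auto simp: stepX_def dest: set_tau[THEN subsetD])

lemma delta_Xs: "2^k \<le> delta (wordY (Xs k))"
proof (induction k)
  case 0
  have "rho \<in> pts (wordY (Xs 0))" by (rule rho_in_pts)
  then have "0 < card (pts (wordY (Xs 0)))" using card_gt_0_iff pts_finite by blast
  then show ?case by (simp add: delta_pts del: Xs.simps)
next
  case (Suc k)
  then show ?case using delta_double[OF set_Xs[of k]] by simp
qed

fun om :: "real \<Rightarrow> gen \<Rightarrow> real" where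
  "om e A = 0" | "om e B = 1" | "om e C = e" | "om e D = e^2"

definition onrm :: "real \<Rightarrow> gen list \<Rightarrow> real" where
  "onrm e l = sum_list (map (om e) l)"

lemma onrm_simps[simp]: "onrm e [] = 0" "onrm e (g # l) = om e g + onrm e l"
  "onrm e (l1 @ l2) = onrm e l1 + onrm e l2"
  by (simp_all add: onrm_def)

lemma om_tau:
  fixes e :: real assumes h: "e^3 + e^2 + e - 2 = 0"
  shows "onrm e (tau g) = (2 / e) * om e g"
proof -
  have e: "0 < e" "e < 1" using eta_bounds[OF h] by auto
  have b: "1 + e^2 + e = 2 / e"
  proof -
    have "e * (1 + e^2 + e) = 2" using h by (simp add: algebra_simps power2_eq_square power3_eq_cube)
    then show ?thesis using e by (simp add: field_simps)
  qed
  show ?thesis using e b by (cases g) (simp_all add: field_simps power2_eq_square)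
qed

lemma onrm_concat_tau:
  fixes e :: real assumes h: "e^3 + e^2 + e - 2 = 0"
  shows "onrm e (concat (map tau l)) = (2 / e) * onrm e l"
  by (induction l) (simp_all add: om_tau[OF h] algebra_simps)

lemma onrm_Xs:
  fixes e :: real assumes h: "e^3 + e^2 + e - 2 = 0"
  shows "onrm e (Xs k) \<le> 2 * (2 / e)^k - 2"
proof (induction k)
  case 0 then show ?case by simp
next
  case (Suc k)
  have e: "0 < e" "e < 1" using eta_bounds[OF h] by auto
  have l2: "2 \<le> 2 / e" using e by (simp add: field_simps)
  have "onrm e (Xs (Suc k)) = (2 / e) * onrm e (Xs k) + 2"
    by (simp add: stepX_def onrm_concat_tau[OF h])
  also have "\<dots> \<le> (2 / e) * (2 * (2 / e)^k - 2) + 2"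
    using mult_left_mono[OF Suc.IH, of "2 / e"] e by simp
  also have "\<dots> \<le> 2 * (2 / e)^(Suc k) - 2" using l2 by (simp add: algebra_simps)
  finally show ?case .
qed

lemma len_le_onrm:
  fixes e :: real assumes h: "e^3 + e^2 + e - 2 = 0"
  shows "set l \<subseteq> {B, C, D} \<Longrightarrow> e^2 * real (length l) \<le> onrm e l"
proof (induction l)
  case Nil then show ?case by simp
next
  case (Cons g l)
  have e: "0 < e" "e < 1" using eta_bounds[OF h] by auto
  have e21: "e^2 \<le> 1" using e by (intro power_le_one) auto
  have "e * e \<le> e * 1" using e by (intro mult_left_mono) auto
  then have e2: "e^2 \<le> e" "e^2 \<le> 1" using e21 by (simp_all add: power2_eq_square)
  have "e^2 \<le> om e g" using Cons.prems e2 by (cases g) auto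
  then show ?case using Cons by (simp add: algebra_simps)
qed

lemma len_wordY: "length (wordY l) = 2 * length l + 1"
  by (induction l) (auto simp: wordY_def)

lemma len_Xs:
  fixes e :: real assumes h: "e^3 + e^2 + e - 2 = 0"
  shows "real (length (wordY (Xs k))) \<le> (4 / e^2 + 1) * (2 / e)^k"
proof -
  have e: "0 < e" "e < 1" using eta_bounds[OF h] by auto
  have p1: "1 \<le> (2 / e)^k" using e by (intro one_le_power) (simp add: field_simps)
  have "e^2 * real (length (Xs k)) \<le> 2 * (2 / e)^k"
    using len_le_onrm[OF h set_Xs[of k]] onrm_Xs[OF h, of k] by linarith
  then have "real (length (Xs k)) \<le> 2 * (2 / e)^k / e^2"
    using e by (simp add: field_simps)
  then have "real (length (wordY (Xs k))) \<le> 4 * (2 / e)^k / e^2 + 1"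
    by (simp add: len_wordY)
  also have "\<dots> \<le> 4 * (2 / e)^k / e^2 + (2 / e)^k" using p1 by simp
  also have "\<dots> = (4 / e^2 + 1) * (2 / e)^k"
    using e by (simp add: distrib_right)
  finally show ?thesis .
qed

lemma ivl:
  fixes l y :: real assumes "1 < l" "1 \<le> y"
  shows "\<exists>k::nat. l^k \<le> y \<and> y < l^(Suc k)"
proof -
  obtain n where n: "y < l^n" using real_arch_pow[OF assms(1)] by blast
  define m where "m = (LEAST n. y < l^n)"
  have m: "y < l^m" unfolding m_def by (rule LeastI[of _ n]) (rule n)
  have m0: "m \<noteq> 0"
  proof
    assume "m = 0" then show False using m assms by simp
  qed
  then obtain k where k: "m = Suc k" by (cases m) auto
  have "\<not> y < l^k" using not_less_Least[of k "\<lambda>n. y < l^n"] k m_def by simp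
  then show ?thesis using m k by (intro exI[of _ k]) simp
qed

lemma nrm_le_len:
  fixes e :: real assumes h: "e^3 + e^2 + e - 2 = 0"
  shows "nrm e w \<le> (1 + wt e B + wt e C + wt e D) * real (length w)"
proof (induction w)
  case Nil then show ?case by simp
next
  case (Cons g s)
  have nn: "\<And>g. wt e g \<ge> 0" using wt_nonneg[OF h] by blast
  have "wt e g \<le> 1 + wt e B + wt e C + wt e D"
    using nn[of B] nn[of C] nn[of D] by (cases g) (simp_all del: wt.simps add: wt.simps(1))
  then show ?case using Cons by (simp del: wt.simps add: algebra_simps)
qed

theorem corollary4p8:
  fixes \<eta> \<alpha> :: real
  assumes "\<eta>^3 + \<eta>^2 + \<eta> - 2 = 0"
    and "\<alpha> = ln 2 / ln (2 / \<eta>)"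
  shows "\<exists>C1 C2 :: real. C1 > 0 \<and> C2 > 0 \<and>
     (\<forall>l::nat. l > 0 \<longrightarrow>
        (\<forall>w. length w = l \<longrightarrow> real (delta w) \<le> C1 * real l powr \<alpha>) \<and>
        (\<exists>w. length w = l \<and> real (delta w) \<ge> C2 * real l powr \<alpha>))"
proof -
  note h = assms(1)
  have e: "0 < \<eta>" "\<eta> < 1" using eta_bounds[OF h] by auto
  define L where "L = 2 / \<eta>"
  have L2: "2 < L" using e by (simp add: L_def field_simps)
  have L1: "1 < L" using L2 by simp
  have lnL: "0 < ln L" using L1 by simp
  have al: "\<alpha> = ln 2 / ln L" using assms(2) by (simp add: L_def)
  have apos: "0 < \<alpha>" using al lnL by simp
  have La: "L powr \<alpha> = 2"
    using L1 lnL by (simp add: powr_def al)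
  have pk: "(L^k) powr \<alpha> = 2^k" for k :: nat
  proof -
    have "(L^k) powr \<alpha> = (L powr real k) powr \<alpha>" using L1 by (simp add: powr_realpow)
    also have "\<dots> = (L powr \<alpha>) powr real k" by (rule powr_powr_swap)
    also have "\<dots> = 2^k" using La by (simp add: powr_realpow)
    finally show ?thesis .
  qed
  define S where "S = 1 + wt \<eta> B + wt \<eta> C + wt \<eta> D"
  have S0: "0 \<le> S" using wt_nonneg[OF h, of B] wt_nonneg[OF h, of C] wt_nonneg[OF h, of D]
    by (simp add: S_def del: wt.simps)
  define C1 where "C1 = 2 + S * L"
  define K where "K = 4 / \<eta>^2 + 1"
  have K1: "1 \<le> K" by (simp add: K_def)
  have Ka: "0 < K powr \<alpha>" using K1 by simp
  define C2 where "C2 = 1 / (2 * K powr \<alpha>)"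
  have "0 \<le> S * L" using S0 L1 by simp
  then have C1pos: "C1 > 0" by (simp add: C1_def)
  have C2pos: "C2 > 0" using Ka by (simp add: C2_def)
  have upper: "real (delta w) \<le> C1 * real l powr \<alpha>" if l: "l > 0" "length w = l" for w l
  proof -
    have y1: "1 \<le> real l" using l by simp
    obtain k where k: "L^k \<le> real l" "real l < L^(Suc k)" using ivl[OF L1 y1] by blast
    have "real (delta w) \<le> 2^(k+1) - 1 + \<eta>^k * nrm \<eta> w" using upper_k[OF h, of k] by blast
    also have "\<dots> \<le> 2^(k+1) + \<eta>^k * (S * real l)"
    proof -
      have "nrm \<eta> w \<le> S * real l" using nrm_le_len[OF h, of w] l by (simp add: S_def del: wt.simps)
      then have "\<eta>^k * nrm \<eta> w \<le> \<eta>^k * (S * real l)" using e by (intro mult_left_mono) auto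
      then show ?thesis by simp
    qed
    also have "\<dots> \<le> 2^(k+1) + \<eta>^k * (S * L^(Suc k))"
      using k(2) S0 e by (intro add_left_mono mult_left_mono) auto
    also have "\<eta>^k * (S * L^(Suc k)) = S * L * (\<eta> * L)^k" by (simp add: algebra_simps power_mult_distrib)
    also have "\<eta> * L = 2" using e by (simp add: L_def)
    also have "2^(k+1) + S * L * 2^k = C1 * 2^k" by (simp add: C1_def algebra_simps)
    also have "\<dots> \<le> C1 * real l powr \<alpha>"
    proof -
      have "(2::real)^k = (L^k) powr \<alpha>" using pk by simp
      also have "\<dots> \<le> real l powr \<alpha>" using k(1) apos L1 by (intro powr_mono2) auto
      finally show ?thesis using C1pos by (simp add: mult_left_mono)
    qed
    finally show ?thesis .
  qed
  have lower: "\<exists>w. length w = l \<and> real (delta w) \<ge> C2 * real l powr \<alpha>" if l: "l > 0" for l :: nat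
  proof (cases "real l < K")
    case True
    have d1: "1 \<le> delta (replicate l A)"
    proof -
      have "0 < card (pts (replicate l A))" using rho_in_pts card_gt_0_iff pts_finite by blast
      then show ?thesis by (simp add: delta_pts)
    qed
    have "real l powr \<alpha> \<le> K powr \<alpha>" using True apos by (intro powr_mono2) auto
    then have "C2 * real l powr \<alpha> \<le> C2 * K powr \<alpha>" using C2pos by (simp add: mult_left_mono)
    also have "\<dots> = 1 / 2" using Ka by (simp add: C2_def)
    also have "\<dots> \<le> real (delta (replicate l A))" using d1 by simp
    finally show ?thesis by (intro exI[of _ "replicate l A"]) simp
  next
    case False
    have y1: "1 \<le> real l / K" using False K1 by simp
    obtain k where k: "L^k \<le> real l / K" "real l / K < L^(Suc k)" using ivl[OF L1 y1] by blast
    have K0: "0 < K" using K1 by simp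
    have lenX: "real (length (wordY (Xs k))) \<le> real l"
    proof -
      have "real (length (wordY (Xs k))) \<le> K * L^k" using len_Xs[OF h, of k] by (simp add: K_def L_def)
      also have "\<dots> \<le> real l" using k(1) K0 by (simp add: field_simps)
      finally show ?thesis .
    qed
    define w where "w = replicate (l - length (wordY (Xs k))) A @ wordY (Xs k)"
    have wl: "length w = l" using lenX by (simp add: w_def)
    have dw: "2^k \<le> delta w" using delta_Xs[of k] delta_suffix[of "wordY (Xs k)"] by (simp add: w_def) (meson order_trans delta_suffix)
    have "real l < K * L^(Suc k)" using k(2) K0 by (simp add: field_simps)
    then have "real l powr \<alpha> \<le> (K * L^(Suc k)) powr \<alpha>" using apos by (intro powr_mono2) auto
    also have "\<dots> = K powr \<alpha> * 2^(Suc k)" using pk[of "Suc k"] by (simp add: powr_mult)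
    finally have "C2 * real l powr \<alpha> \<le> C2 * (K powr \<alpha> * 2^(Suc k))" using C2pos by (simp add: mult_left_mono)
    also have "\<dots> = 2^k" using Ka by (simp add: C2_def)
    also have "\<dots> \<le> real (delta w)" using dw by (simp add: of_nat_le_iff[symmetric])
    finally show ?thesis using wl by blast
  qed
  show ?thesis using C1pos C2pos upper lower by blast
qed
end
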